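(* Let $\lambda>0$, $\ell>0$, $a_1,a_2,a_3\in\mathbb{R}$, fix $z>0$, and consider the map $(x_0,y_0)\mapsto(x,y)$ given by $$x=x_0+\frac{\lambda z}{2\pi\ell}\left(a_1+2a_3\frac{x_0}{\ell}+2\frac{x_0y_0}{\ell^2}\right),\qquad y=y_0+\frac{\lambda z}{2\pi\ell}\left(a_2+\frac{3y_0^2+x_0^2}{\ell^2}\right).$$ Let $A\doteq a_3+\frac{2\pi\ell^2}{3\lambda z}$ and assume $A\neq0$. Then the set of caustic points of this map (points $(x,y)$ that are images of some $(x_0,y_0)$ at which the Jacobian determinant $\det\partial(x,y)/\partial(x_0,y_0)$ vanishes) is the union, over the two choices of sign, of the curves $\zeta\in\mathbb{R}\mapsto(x_c(\zeta),y_c(\zeta))$ with $$x_c(\zeta)=a_1\frac{\lambda z}{2\pi\ell}-\frac{\sqrt3\,\lambda z}{4\pi\ell}A^2\sinh(\zeta)\left[\cosh(\zeta)\pm1\right],$$ $$y_c(\zeta)=a_2\frac{\lambda z}{2\pi\ell}-\frac{\pi\ell^3}{6\lambda z}+\frac{3\lambda z}{4\pi\ell}A^2\cosh(\zeta)\left[\cosh(\zeta)\mp1\right].$$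
   Context: In the formulas for $x_c$ and $y_c$, the upper signs are taken together and the lower signs are taken together. *)

theory Defs
  imports "HOL-Analysis.Analysis"
begin

definition propmap :: "real \<Rightarrow> real \<Rightarrow> real \<Rightarrow> real \<Rightarrow> real \<Rightarrow> real \<Rightarrow> real \<times> real \<Rightarrow> real \<times> real" where
  "propmap lam l a1 a2 a3 z = (\<lambda>(x0, y0).
     (x0 + lam * z / (2 * pi * l) * (a1 + 2 * a3 * x0 / l + 2 * x0 * y0 / l^2),
      y0 + lam * z / (2 * pi * l) * (a2 + (3 * y0^2 + x0^2) / l^2)))"

definition jacdet :: "(real \<times> real \<Rightarrow> real \<times> real) \<Rightarrow> real \<times> real \<Rightarrow> real" where
  "jacdet F p =
     deriv (\<lambda>t. fst (F (t, snd p))) (fst p) * deriv (\<lambda>t. snd (F (fst p, t))) (snd p)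
   - deriv (\<lambda>t. fst (F (fst p, t))) (snd p) * deriv (\<lambda>t. snd (F (t, snd p))) (fst p)"

definition caustic :: "(real \<times> real \<Rightarrow> real \<times> real) \<Rightarrow> (real \<times> real) set" where
  "caustic F = {F p | p. jacdet F p = 0}"

text \<open>The caustic curves; s = 1 gives the upper signs, s = -1 the lower signs.\<close>
definition xc :: "real \<Rightarrow> real \<Rightarrow> real \<Rightarrow> real \<Rightarrow> real \<Rightarrow> real \<Rightarrow> real \<Rightarrow> real" where
  "xc lam l a1 a3 z s \<zeta> =
     (let A = a3 + 2 * pi * l^2 / (3 * lam * z) in
      a1 * lam * z / (2 * pi * l)
      - sqrt 3 * lam * z / (4 * pi * l) * A^2 * sinh \<zeta> * (cosh \<zeta> + s))"

definition yc :: "real \<Rightarrow> real \<Rightarrow> real \<Rightarrow> real \<Rightarrow> real \<Rightarrow> real \<Rightarrow> real \<Rightarrow> real" where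
  "yc lam l a2 a3 z s \<zeta> =
     (let A = a3 + 2 * pi * l^2 / (3 * lam * z) in
      a2 * lam * z / (2 * pi * l) - pi * l^3 / (6 * lam * z)
      + 3 * lam * z / (4 * pi * l) * A^2 * cosh \<zeta> * (cosh \<zeta> - s))"

end

theory Submission
  imports Defs
begin

lemma jac:
  fixes lam l a1 a2 a3 z x0 y0 :: real
  assumes l0: "l > 0"
  defines "c \<equiv> lam * z / (2 * pi * l)"
  shows "jacdet (propmap lam l a1 a2 a3 z) (x0, y0) =
     (1 + c * (2 * a3 / l + 2 * y0 / l^2)) * (1 + c * (6 * y0 / l^2)) - (c * (2 * x0 / l^2))^2"
proof -
  have d1: "deriv (\<lambda>t. fst (propmap lam l a1 a2 a3 z (t, y0))) x0 = 1 + c * (2 * a3 / l + 2 * y0 / l^2)"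
    unfolding propmap_def c_def
    using l0 by (intro DERIV_imp_deriv) (auto intro!: derivative_eq_intros simp: field_simps)
  have d2: "deriv (\<lambda>t. snd (propmap lam l a1 a2 a3 z (x0, t))) y0 = 1 + c * (6 * y0 / l^2)"
    unfolding propmap_def c_def
    using l0 by (intro DERIV_imp_deriv) (auto intro!: derivative_eq_intros simp: field_simps)
  have d3: "deriv (\<lambda>t. fst (propmap lam l a1 a2 a3 z (x0, t))) y0 = c * (2 * x0 / l^2)"
    unfolding propmap_def c_def
    using l0 by (intro DERIV_imp_deriv) (auto intro!: derivative_eq_intros simp: field_simps)
  have d4: "deriv (\<lambda>t. snd (propmap lam l a1 a2 a3 z (t, y0))) x0 = c * (2 * x0 / l^2)"
    unfolding propmap_def c_def
    using l0 by (intro DERIV_imp_deriv) (auto intro!: derivative_eq_intros simp: field_simps)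
  show ?thesis unfolding jacdet_def using d1 d2 d3 d4 by (simp add: power2_eq_square)
qed


lemma fwd:
  fixes l B c a1 a2 a3 A x0 y0 :: real
  assumes l: "l > 0" and B: "B > 0" and c: "c = l / (3* B)" and A: "A = a3 + B" and A0: "A \<noteq> 0"
  and J: "(1 + c * (2 * a3 / l + 2 * y0 / l^2)) * (1 + c * (6 * y0 / l^2)) - (c * (2 * x0 / l^2))^2 = 0"
  shows "\<exists>s\<in>{1,-1::real}. \<exists>\<zeta>. x0 + c * (a1 + 2 * a3 * x0 / l + 2 * x0 * y0 / l^2) = a1* c - sqrt 3 * c / 2 * A^2 * sinh \<zeta> * (cosh \<zeta> + s)
      \<and> y0 + c * (a2 + (3 * y0^2 + x0^2) / l^2) = a2* c - l* B/4 + 3* c/2* A^2 * cosh \<zeta> * (cosh \<zeta> - s)"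
proof -
  define u where "u = x0 / l"
  define v where "v = y0 / l"
  define w where "w = v + B/2"
  have x0: "x0 = l * u" and y0: "y0 = l * v" using l by (auto simp: u_def v_def)
  have H: "u^2 = 3* w*(w+A)"
  proof -
    have eq: "(1 + c * (2 * a3 / l + 2 * y0 / l^2)) * (1 + c * (6 * y0 / l^2)) - (c * (2 * x0 / l^2))^2
       = ((3* B + 2* a3 + 2 * v) * (3* B + 6 * v) - 4 * u^2) / (9* B^2)"
      unfolding c x0 y0 using l B by (simp add: field_simps power2_eq_square)
    have "(3* B + 2* a3 + 2 * v) * (3* B + 6 * v) - 4 * u^2 = 0"
      using J B unfolding eq by simp
    thus ?thesis unfolding w_def A by algebra
  qed
  define t where "t = (2* w + A)/A"
  define s :: real where "s = (if t \<ge> 0 then 1 else -1)"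
  define \<sigma> where "\<sigma> = -2* u* s/(sqrt 3 * A)"
  define \<zeta> where "\<zeta> = arsinh \<sigma>"
  have s2: "s^2 = 1" by (simp add: s_def)
  have st: "s* t \<ge> 0" by (simp add: s_def)
  have r3: "sqrt 3 ^2 = 3" by simp
  have r3p: "sqrt 3 > 0" by simp
  have sig2: "\<sigma>^2 + 1 = (s* t)^2"
  proof -
    have "\<sigma>^2 = 4* u^2* s^2/(3* A^2)" unfolding \<sigma>_def by (simp add: power_mult_distrib power_divide r3)
    also have "\<dots> = 4* u^2/(3* A^2)" using s2 by simp
    finally have "\<sigma>^2 = 4* u^2/(3* A^2)" .
    moreover have "(s* t)^2 = t^2" using s2 by (simp add: power_mult_distrib)
    ultimately show ?thesis unfolding t_def H using A0 by (simp add: field_simps) (simp add: algebra_simps power2_eq_square)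
  qed
  have sh: "sinh \<zeta> = \<sigma>" by (simp add: \<zeta>_def)
  have ch: "cosh \<zeta> = s* t" unfolding \<zeta>_def cosh_arsinh_real add.commute[of "\<sigma>^2"]
    using sig2 st by (simp add: add.commute)
  show ?thesis
  proof (intro bexI exI conjI)
    show "s \<in> {1, -1}" by (simp add: s_def)
    have l3: "l = 3 * c * B" using B unfolding c by simp
    have "sqrt 3 * c / 2 * A^2 * sinh \<zeta> * (cosh \<zeta> + s) = sqrt 3 * c / 2 * A^2 * (-2 * u * (t+1) / (sqrt 3 * A)) * (s^2)"
      using A0 unfolding sh ch \<sigma>_def by (simp add: field_simps power2_eq_square)
    also have "\<dots> = - c * u * (2*w + 2*A)"
      using s2 A0 r3p unfolding t_def by (simp add: field_simps power2_eq_square)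
    finally have X: "sqrt 3 * c / 2 * A^2 * sinh \<zeta> * (cosh \<zeta> + s) = - c * u * (2*w + 2*A)" .
    show "x0 + c * (a1 + 2 * a3 * x0 / l + 2 * x0 * y0 / l^2) = a1 * c - sqrt 3 * c / 2 * A^2 * sinh \<zeta> * (cosh \<zeta> + s)"
      unfolding X x0 y0 using l B unfolding w_def A l3 by (simp add: field_simps power2_eq_square)
    have "3 * c/2 * A^2 * cosh \<zeta> * (cosh \<zeta> - s) = 3 * c/2 * A^2 * (t^2 - t) * s^2"
      unfolding ch by (simp add: algebra_simps power2_eq_square)
    also have "\<dots> = 3 * c * w * (2*w + A)"
      using s2 A0 unfolding t_def by (simp add: field_simps power2_eq_square)
    finally have Y: "3 * c/2 * A^2 * cosh \<zeta> * (cosh \<zeta> - s) = 3 * c * w * (2*w + A)" .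
    show "y0 + c * (a2 + (3 * y0^2 + x0^2) / l^2) = a2 * c - l * B/4 + 3 * c/2 * A^2 * cosh \<zeta> * (cosh \<zeta> - s)"
    proof -
      have "y0 + c * (a2 + (3 * y0^2 + x0^2) / l^2) = a2 * c + l * v + c * (3 * v^2 + u^2)"
        unfolding x0 y0 using l by (simp add: field_simps power2_eq_square)
      also have "\<dots> = a2 * c - l * B/4 + 3 * c * w * (2*w + A)"
        unfolding H unfolding l3 w_def by (simp add: field_simps power2_eq_square)
      finally show ?thesis unfolding Y .
    qed
  qed
qed


lemma bwd:
  fixes l B c a1 a2 a3 A s \<zeta> :: real
  assumes l: "l > 0" and B: "B > 0" and c: "c = l / (3*B)" and A: "A = a3 + B" and s: "s \<in> {1, -1}"
  shows "\<exists>x0 y0. (1 + c * (2 * a3 / l + 2 * y0 / l^2)) * (1 + c * (6 * y0 / l^2)) - (c * (2 * x0 / l^2))^2 = 0 \<and>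
      x0 + c * (a1 + 2 * a3 * x0 / l + 2 * x0 * y0 / l^2) = a1 * c - sqrt 3 * c / 2 * A^2 * sinh \<zeta> * (cosh \<zeta> + s)
      \<and> y0 + c * (a2 + (3 * y0^2 + x0^2) / l^2) = a2 * c - l * B/4 + 3 * c/2 * A^2 * cosh \<zeta> * (cosh \<zeta> - s)"
proof -
  define w where "w = A/2 * (s * cosh \<zeta> - 1)"
  define u where "u = - (sqrt 3 * A / 2) * s * sinh \<zeta>"
  define v where "v = w - B/2"
  define x0 where "x0 = l * u"
  define y0 where "y0 = l * v"
  have s2: "s^2 = 1" using s by auto
  have r3: "sqrt 3 ^2 = 3" by simp
  have cs: "cosh \<zeta> ^2 = sinh \<zeta> ^2 + 1" by (rule cosh_square_eq)
  have H: "u^2 = 3 * w * (w+A)"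
  proof -
    have "u^2 = 3 * A^2 / 4 * s^2 * sinh \<zeta> ^2" unfolding u_def by (simp add: power_mult_distrib power_divide r3)
    also have "\<dots> = 3 * A^2 / 4 * (s^2 * cosh \<zeta>^2 - 1)" using s2 cs by simp
    also have "\<dots> = 3 * w * (w+A)" unfolding w_def by (simp add: field_simps power2_eq_square)
    finally show ?thesis .
  qed
  have l3: "l = 3 * c * B" using B unfolding c by simp
  have eq: "(1 + c * (2 * a3 / l + 2 * y0 / l^2)) * (1 + c * (6 * y0 / l^2)) - (c * (2 * x0 / l^2))^2
       = ((3*B + 2*a3 + 2 * v) * (3*B + 6 * v) - 4 * u^2) / (9*B^2)"
    unfolding c x0_def y0_def using l B by (simp add: field_simps power2_eq_square)
  have X: "sqrt 3 * c / 2 * A^2 * sinh \<zeta> * (cosh \<zeta> + s) = - c * u * (2*w + 2*A)"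
  proof -
    have "- c * u * (2*w + 2*A) = sqrt 3 * c / 2 * A^2 * sinh \<zeta> * (s^2 * cosh \<zeta> + s)"
      unfolding u_def w_def by (simp add: field_simps power2_eq_square)
    thus ?thesis using s2 by simp
  qed
  have Y: "3 * c/2 * A^2 * cosh \<zeta> * (cosh \<zeta> - s) = 3 * c * w * (2*w + A)"
  proof -
    have "3 * c * w * (2*w + A) = 3 * c/2 * A^2 * cosh \<zeta> * (s^2 * cosh \<zeta> - s)"
      unfolding w_def by (simp add: field_simps power2_eq_square)
    thus ?thesis by (metis s2 mult_1)
  qed
  show ?thesis
  proof (intro exI conjI)
    show "(1 + c * (2 * a3 / l + 2 * y0 / l^2)) * (1 + c * (6 * y0 / l^2)) - (c * (2 * x0 / l^2))^2 = 0"
      unfolding eq H unfolding v_def A by (simp add: field_simps power2_eq_square)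
    show "x0 + c * (a1 + 2 * a3 * x0 / l + 2 * x0 * y0 / l^2) = a1 * c - sqrt 3 * c / 2 * A^2 * sinh \<zeta> * (cosh \<zeta> + s)"
      unfolding X x0_def y0_def using l B unfolding v_def A l3 by (simp add: field_simps power2_eq_square)
    have "y0 + c * (a2 + (3 * y0^2 + x0^2) / l^2) = a2 * c + l * v + c * (3 * v^2 + u^2)"
      unfolding x0_def y0_def using l by (simp add: field_simps power2_eq_square)
    also have "\<dots> = a2 * c - l * B/4 + 3 * c * w * (2*w + A)"
      unfolding H unfolding l3 v_def by (simp add: field_simps power2_eq_square)
    finally show "y0 + c * (a2 + (3 * y0^2 + x0^2) / l^2) = a2 * c - l * B/4 + 3 * c/2 * A^2 * cosh \<zeta> * (cosh \<zeta> - s)"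
      unfolding Y .
  qed
qed


theorem mainTheorem7:
  fixes lam l a1 a2 a3 z :: real
  assumes "lam > 0" and "l > 0" and "z > 0"
    and "a3 + 2 * pi * l^2 / (3 * lam * z) \<noteq> 0"
  shows "caustic (propmap lam l a1 a2 a3 z) =
    (\<Union>s\<in>{1, -1::real}. {(xc lam l a1 a3 z s \<zeta>, yc lam l a2 a3 z s \<zeta>) | \<zeta>. True})"
proof -
  note lam = assms(1) and l = assms(2) and z = assms(3)
  define B where "B = 2 * pi * l^2 / (3 * lam * z)"
  define c where "c = lam * z / (2 * pi * l)"
  define A where "A = a3 + B"
  have A0: "A \<noteq> 0" using assms(4) unfolding A_def B_def .
  have Bp: "B > 0" unfolding B_def using lam l z by simp
  have cB: "c = l / (3 * B)" unfolding c_def B_def using lam l z by (simp add: field_simps power2_eq_square)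
  have xce: "xc lam l a1 a3 z s \<zeta> = a1 * c - sqrt 3 * c / 2 * A^2 * sinh \<zeta> * (cosh \<zeta> + s)" for s \<zeta>
    unfolding xc_def Let_def A_def B_def c_def using lam l z by (simp add: field_simps)
  have yce: "yc lam l a2 a3 z s \<zeta> = a2 * c - l * B/4 + 3 * c/2 * A^2 * cosh \<zeta> * (cosh \<zeta> - s)" for s \<zeta>
    unfolding yc_def Let_def A_def B_def c_def using lam l z by (simp add: field_simps power2_eq_square power3_eq_cube)
  have pm: "propmap lam l a1 a2 a3 z (x0, y0) = (x0 + c * (a1 + 2 * a3 * x0 / l + 2 * x0 * y0 / l^2),
      y0 + c * (a2 + (3 * y0^2 + x0^2) / l^2))" for x0 y0
    unfolding propmap_def c_def by simp
  have jd: "jacdet (propmap lam l a1 a2 a3 z) (x0, y0) =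
     (1 + c * (2 * a3 / l + 2 * y0 / l^2)) * (1 + c * (6 * y0 / l^2)) - (c * (2 * x0 / l^2))^2" for x0 y0
    unfolding c_def by (rule jac[OF l])
  show ?thesis
  proof (rule set_eqI, rule iffI)
    fix q assume "q \<in> caustic (propmap lam l a1 a2 a3 z)"
    then obtain x0 y0 where q: "q = propmap lam l a1 a2 a3 z (x0, y0)"
      and J: "jacdet (propmap lam l a1 a2 a3 z) (x0, y0) = 0"
      unfolding caustic_def by auto
    obtain s \<zeta> where s: "s \<in> {1, -1::real}" and
      e1: "x0 + c * (a1 + 2 * a3 * x0 / l + 2 * x0 * y0 / l^2) = a1 * c - sqrt 3 * c / 2 * A^2 * sinh \<zeta> * (cosh \<zeta> + s)"
      and e2: "y0 + c * (a2 + (3 * y0^2 + x0^2) / l^2) = a2 * c - l * B/4 + 3 * c/2 * A^2 * cosh \<zeta> * (cosh \<zeta> - s)"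
      using fwd[OF l Bp cB A_def A0 J[unfolded jd]] by blast
    have "q = (xc lam l a1 a3 z s \<zeta>, yc lam l a2 a3 z s \<zeta>)"
      unfolding q pm xce yce e1 e2 ..
    thus "q \<in> (\<Union>s\<in>{1, -1::real}. {(xc lam l a1 a3 z s \<zeta>, yc lam l a2 a3 z s \<zeta>) | \<zeta>. True})"
      using s by blast
  next
    fix q assume "q \<in> (\<Union>s\<in>{1, -1::real}. {(xc lam l a1 a3 z s \<zeta>, yc lam l a2 a3 z s \<zeta>) | \<zeta>. True})"
    then obtain s \<zeta> where s: "s \<in> {1, -1::real}" and q: "q = (xc lam l a1 a3 z s \<zeta>, yc lam l a2 a3 z s \<zeta>)"
      by blast
    obtain x0 y0 where J: "(1 + c * (2 * a3 / l + 2 * y0 / l^2)) * (1 + c * (6 * y0 / l^2)) - (c * (2 * x0 / l^2))^2 = 0"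
      and e1: "x0 + c * (a1 + 2 * a3 * x0 / l + 2 * x0 * y0 / l^2) = a1 * c - sqrt 3 * c / 2 * A^2 * sinh \<zeta> * (cosh \<zeta> + s)"
      and e2: "y0 + c * (a2 + (3 * y0^2 + x0^2) / l^2) = a2 * c - l * B/4 + 3 * c/2 * A^2 * cosh \<zeta> * (cosh \<zeta> - s)"
      using bwd[OF l Bp cB A_def s] by blast
    have "q = propmap lam l a1 a2 a3 z (x0, y0)"
      unfolding q pm xce yce e1 e2 ..
    moreover have "jacdet (propmap lam l a1 a2 a3 z) (x0, y0) = 0" unfolding jd by (rule J)
    ultimately show "q \<in> caustic (propmap lam l a1 a2 a3 z)" unfolding caustic_def by blast
  qed
qed

end
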